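(* Let $B$ be a metric space and $f:B\to B$ a continuous map such that $(B,f)$ is minimal. Then there exists an irrational rotation $g$ of the circle $\mathbb S^1$ such that the direct product system $(B\times\mathbb S^1,f\times g)$ is minimal.
   Context: A dynamical system $(X,f)$ with $f$ continuous is minimal if the forward orbit $\{x,f(x),f^2(x),\dots\}$ of every point $x\in X$ is dense in $X$. $(f\times g)(x,s)=(f(x),g(s))$. *)

theory Defs
  imports "HOL-Analysis.Analysis"
begin

definition forward_orbit :: "('a \<Rightarrow> 'a) \<Rightarrow> 'a \<Rightarrow> 'a set" where
  "forward_orbit f x = {(f ^^ n) x | n. True}"

definition minimal_system :: "'a::topological_space set \<Rightarrow> ('a \<Rightarrow> 'a) \<Rightarrow> bool" where
  "minimal_system X f \<longleftrightarrow> continuous_on X f \<and> f ` X \<subseteq> X \<and>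
     (\<forall>x\<in>X. X \<subseteq> closure (forward_orbit f x))"

text \<open>The circle S^1 as the unit circle in the complex plane; the rotation by
  angle 2 pi a is multiplication by cis (2 pi a); it is irrational iff a is irrational.\<close>
definition circle_rotation :: "real \<Rightarrow> complex \<Rightarrow> complex" where
  "circle_rotation a z = cis (2 * pi * a) * z"

end

theory Submission
  imports Defs
begin

lemma exists_irrational: "\<exists>a::real. a \<notin> \<rat>"
proof (rule ccontr)
  assume "\<not> ?thesis"
  then have "(UNIV::real set) = \<rat>" by auto
  then show False using countable_rat uncountable_UNIV_real by metis
qed

lemma funpow_F:
  fixes f :: "'a \<Rightarrow> 'a"
  shows "((\<lambda>(x, z). (f x, circle_rotation a z)) ^^ n) (x, z) = ((f ^^ n) x, cis (2 * pi * real n * a) * z)"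
proof (induction n)
  case 0 then show ?case by (simp add: funpow_0)
next
  case (Suc n)
  have "cis (2 * pi * a) * cis (2 * pi * real n * a) = cis (2 * pi * real (Suc n) * a)"
    by (simp add: cis_mult algebra_simps)
  then show ?case using Suc by (simp add: circle_rotation_def mult.assoc[symmetric])
qed

lemma funpow_maps: "f ` B \<subseteq> B \<Longrightarrow> x \<in> B \<Longrightarrow> (f ^^ n) x \<in> B"
  by (induction n) auto

lemma funpow_cont: "continuous_on B f \<Longrightarrow> f ` B \<subseteq> B \<Longrightarrow> continuous_on B (f ^^ n)"
proof (induction n)
  case 0 then show ?case by (simp add: continuous_on_id)
next
  case (Suc n)
  have "continuous_on B (f \<circ> (f ^^ n))"
    apply (rule continuous_on_compose)
    using Suc apply simp
    using Suc funpow_maps[of f B] by (metis continuous_on_subset image_subsetI)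
  then show ?case by (simp add: funpow_Suc_right[symmetric] funpow_swap1 comp_def)
qed

lemma cis_approx:
  assumes "norm v = 1" "e > 0"
  shows "\<exists>t\<in>\<rat>. dist (cis (2 * pi * t)) v < e"
proof -
  define s where "s = Arg v / (2 * pi)"
  have v: "cis (2 * pi * s) = v"
    using assms cis_Arg[of v] by (force simp: s_def sgn_div_norm)
  have "isCont (\<lambda>t. cis (2 * pi * t)) s"
    unfolding cis_conv_exp by (intro continuous_intros)
  then obtain d where d: "d > 0" "\<And>x'. dist x' s < d \<Longrightarrow> dist (cis (2 * pi * x')) (cis (2 * pi * s)) < e"
    using assms(2) unfolding continuous_at_eps_delta by blast
  obtain t where t: "t \<in> \<rat>" "s - d < t" "t < s + d"
    using Rats_dense_in_real[of "s - d" "s + d"] d by auto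
  then have "dist t s < d" by (auto simp: dist_real_def)
  then show ?thesis using d t v by auto
qed


theorem proposition1:
  fixes B :: "'a::metric_space set" and f :: "'a \<Rightarrow> 'a"
  assumes "minimal_system B f"
  shows "\<exists>a::real. a \<notin> \<rat> \<and>
    minimal_system (B \<times> sphere (0::complex) 1)
      (\<lambda>(x, z). (f x, circle_rotation a z))"
proof (cases "B = {}")
  case True
  obtain a :: real where "a \<notin> \<rat>" using exists_irrational by blast
  then show ?thesis using True by (intro exI[of _ a]) (simp add: minimal_system_def)
next
  case False
  then obtain x0 where x0: "x0 \<in> B" by blast
  have contf: "continuous_on B f" and fB: "f ` B \<subseteq> B"
    and dense: "\<And>x. x \<in> B \<Longrightarrow> B \<subseteq> closure (forward_orbit f x)"
    using assms unfolding minimal_system_def by auto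
  have orb_approx: "\<exists>n. dist ((f^^n) x) y < e" if "x \<in> B" "y \<in> B" "e > 0" for x y and e :: real
  proof -
    have "y \<in> closure (forward_orbit f x)" using dense that by blast
    then obtain p where "p \<in> forward_orbit f x" "dist p y < e" using \<open>e>0\<close> closure_approachable by metis
    then show ?thesis unfolding forward_orbit_def by auto
  qed
  have inf: "\<exists>n\<ge>M. dist ((f^^n) x0) ((f^^m) x0) < e" if e: "e > 0" for m M and e :: real
  proof -
    have "(f^^M) x0 \<in> B" "(f^^m) x0 \<in> B" using funpow_maps[OF fB x0] by auto
    then obtain k where "dist ((f^^k) ((f^^M) x0)) ((f^^m) x0) < e" using orb_approx e by blast
    then show ?thesis
      by (intro exI[of _ "k + M"]) (simp add: funpow_add)
  qed
  define G where "G m r t = {a::real. \<exists>n. dist ((f^^n) x0) ((f^^m) x0) < 1 / real (Suc r) \<and>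
     dist (cis (2*pi*real n*a)) (cis (2*pi*t)) < 1 / real (Suc r)}" for m r :: nat and t :: real
  define \<G> where "\<G> = (\<lambda>(m,r,t). G m r t) ` (UNIV \<times> UNIV \<times> \<rat>) \<union> (\<lambda>q. - {q}) ` \<rat>"
  have cG: "countable \<G>"
    unfolding \<G>_def by (intro countable_Un countable_image countable_SIGMA countable_rat) auto
  have G_open: "open (G m r t)" for m r t
  proof -
    have "G m r t = (\<Union>n\<in>{n. dist ((f^^n) x0) ((f^^m) x0) < 1 / real (Suc r)}.
         {a. dist (cis (2*pi*real n*a)) (cis (2*pi*t)) < 1 / real (Suc r)})"
      unfolding G_def by auto
    also have "open \<dots>"
      unfolding cis_conv_exp by (intro open_UN ballI open_Collect_less continuous_intros)
    finally show ?thesis .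
  qed
  have G_dense: "a0 \<in> closure (G m r t)" for m r t a0
  proof -
    have "\<forall>e>0. \<exists>a\<in>G m r t. dist a a0 < e"
    proof (intro allI impI)
      fix e :: real assume "e > 0"
      obtain n where n: "n \<ge> nat \<lceil>1/e\<rceil> + 1" "dist ((f^^n) x0) ((f^^m) x0) < 1 / real (Suc r)"
        using inf[of "1 / real (Suc r)"] by auto
      have "real n \<ge> real (nat \<lceil>1/e\<rceil>) + 1" using n(1) by linarith
      then have npos: "real n > 1/e" using real_nat_ceiling_ge[of "1/e"] by linarith
      then have n0: "real n > 0" using \<open>e > 0\<close> by (smt (verit) divide_pos_pos)
      have ne: "1 / real n < e" using npos n0 \<open>e > 0\<close> by (simp add: field_simps)
      define k where "k = \<lceil>real n * a0 - t\<rceil>"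
      define a where "a = (t + of_int k) / real n"
      have na: "real n * a = t + of_int k" using n0 by (simp add: a_def)
      have k1: "0 \<le> t + of_int k - real n * a0" "t + of_int k - real n * a0 < 1"
        unfolding k_def by linarith+
      have "a - a0 = (t + of_int k - real n * a0) / real n" using n0 by (simp add: a_def field_simps)
      then have "\<bar>a - a0\<bar> < 1 / real n" using k1 n0 by (simp add: divide_strict_right_mono)
      then have d: "dist a a0 < e" using ne by (simp add: dist_real_def)
      have "2*pi*real n*a = 2*pi*t + 2*pi* of_int k" proof -
        have "2*pi*real n*a = 2*pi*(real n*a)" by (simp only: mult.assoc)
        also have "\<dots> = 2*pi*t + 2*pi * of_int k" by (simp only: na distrib_left)
        finally show ?thesis .
      qed
      then have "cis (2*pi*real n*a) = cis (2*pi*t)"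
        by (simp add: cis_mult[symmetric])
      then have "a \<in> G m r t" unfolding G_def using n(2) by auto
      then show "\<exists>a\<in>G m r t. dist a a0 < e" using d by blast
    qed
    then show ?thesis using closure_approachable by blast
  qed
  have C_dense: "a0 \<in> closure (- {q})" for q a0 :: real
  proof -
    have "\<forall>e>0. \<exists>a\<in>- {q}. dist a a0 < e"
    proof (intro allI impI)
      fix e :: real assume "e > 0"
      show "\<exists>a\<in>- {q}. dist a a0 < e"
      proof (cases "a0 = q")
        case True
        then show ?thesis using \<open>e>0\<close> by (intro bexI[of _ "a0 + e/2"]) (auto simp: dist_real_def)
      next
        case False
        then show ?thesis using \<open>e>0\<close> by (intro bexI[of _ a0]) auto
      qed
    qed
    then show ?thesis using closure_approachable by blast
  qed
  have "(UNIV::real set) \<subseteq> closure (\<Inter>\<G>)"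
  proof (rule Baire[OF closed_UNIV cG])
    fix T assume "T \<in> \<G>"
    then show "openin (top_of_set UNIV) T \<and> UNIV \<subseteq> closure T"
      unfolding \<G>_def using G_open G_dense C_dense by auto
  qed
  then have "\<Inter>\<G> \<noteq> {}" by auto
  then obtain a where a: "a \<in> \<Inter>\<G>" by blast
  have airr: "a \<notin> \<rat>"
  proof
    assume "a \<in> \<rat>" then have "- {a} \<in> \<G>" unfolding \<G>_def by (intro UnI2 imageI)
    then show False using a by auto
  qed
  have aG: "a \<in> G m r t" if "t \<in> \<rat>" for m r t
  proof -
    have "G m r t \<in> \<G>" unfolding \<G>_def using that by (intro UnI1 image_eqI[of _ _ "(m,r,t)"]) auto
    then show ?thesis using a by auto
  qed
  define S where "S = sphere (0::complex) 1"
  define F where "F = (\<lambda>(x, z). (f x, circle_rotation a z))"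
  have D0: "\<exists>k. dist ((f^^k) x0) y < \<rho> \<and> dist (cis (2*pi*real k*a)) v < \<rho>"
    if yB: "y \<in> B" and nv: "norm v = 1" and rp: "\<rho> > 0" for y v \<rho>
  proof -
    obtain m0 where m0: "dist ((f^^m0) x0) y < \<rho>/2" using orb_approx[OF x0 yB, of "\<rho>/2"] rp by auto
    obtain r where r: "inverse (real (Suc r)) < \<rho>/2" using reals_Archimedean[of "\<rho>/2"] rp by auto
    obtain t where t: "t \<in> \<rat>" "dist (cis (2 * pi * t)) v < \<rho>/2" using cis_approx[OF nv, of "\<rho>/2"] rp by auto
    obtain k where k: "dist ((f^^k) x0) ((f^^m0) x0) < 1 / real (Suc r)"
       "dist (cis (2*pi*real k*a)) (cis (2*pi*t)) < 1 / real (Suc r)"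
      using aG[OF t(1), of m0 r] unfolding G_def by auto
    have "dist ((f^^k) x0) y < \<rho>"
      using dist_triangle[of "(f^^k) x0" y "(f^^m0) x0"] k(1) m0 r by (simp add: inverse_eq_divide)
    moreover have "dist (cis (2*pi*real k*a)) v < \<rho>"
      using dist_triangle[of "cis (2*pi*real k*a)" v "cis (2*pi*t)"] k(2) t(2) r by (simp add: inverse_eq_divide)
    ultimately show ?thesis by blast
  qed
  have "minimal_system (B \<times> S) F"
    unfolding minimal_system_def
  proof (intro conjI ballI)
    have "continuous_on (B \<times> S) (\<lambda>p. (f (fst p), cis (2*pi*a) * snd p))"
      by (intro continuous_intros continuous_on_compose2[OF contf]) auto
    moreover have "F = (\<lambda>p. (f (fst p), cis (2*pi*a) * snd p))"
      by (auto simp: F_def circle_rotation_def)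
    ultimately show "continuous_on (B \<times> S) F" by simp
  next
    show "F ` (B \<times> S) \<subseteq> B \<times> S"
      using fB by (auto simp: F_def S_def circle_rotation_def norm_mult)
  next
    fix p assume "p \<in> B \<times> S"
    then obtain x z where p: "p = (x, z)" "x \<in> B" "norm z = 1" by (auto simp: S_def)
    show "B \<times> S \<subseteq> closure (forward_orbit F p)"
    proof
      fix q assume "q \<in> B \<times> S"
      then obtain y u where q: "q = (y, u)" "y \<in> B" "norm u = 1" by (auto simp: S_def)
      have "\<forall>k. \<exists>n. dist ((f^^n) x) x0 < 1 / real (Suc k)"
        using orb_approx[OF p(2) x0] by simp
      then obtain ns where ns: "\<And>k. dist ((f^^(ns k)) x) x0 < 1 / real (Suc k)" by metis
      define \<sigma> where "\<sigma> k = cis (2*pi*real (ns k)*a) * z" for k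
      have "\<forall>k. \<sigma> k \<in> S" using p(3) by (simp add: \<sigma>_def S_def norm_mult)
      then obtain w r where w: "w \<in> S" "strict_mono r" "(\<sigma> \<circ> r) \<longlonglongrightarrow> w"
        using seq_compactE[OF compact_imp_seq_compact[OF compact_sphere]] unfolding S_def by metis
      have nw: "norm w = 1" using w(1) by (simp add: S_def)
      have W: "\<exists>m. dist ((f^^m) x) x0 < \<delta> \<and> dist (cis (2*pi*real m*a) * z) w < \<eta>"
        if dp: "\<delta> > 0" and ep: "\<eta> > 0" for \<delta> \<eta>
      proof -
        obtain no where no: "\<And>n. n \<ge> no \<Longrightarrow> dist ((\<sigma> \<circ> r) n) w < \<eta>"
          using w(3) ep unfolding lim_sequentially by blast
        obtain K0 where K0: "inverse (real (Suc K0)) < \<delta>" using reals_Archimedean[OF dp] by blast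
        define k where "k = max no K0"
        have "K0 \<le> r k" using seq_suble[OF w(2), of k] by (simp add: k_def)
        then have "1 / real (Suc (r k)) \<le> inverse (real (Suc K0))"
          by (simp add: inverse_eq_divide frac_le)
        then have "dist ((f^^(ns (r k))) x) x0 < \<delta>" using ns[of "r k"] K0 by linarith
        moreover have "dist (\<sigma> (r k)) w < \<eta>" using no[of k] by (simp add: k_def)
        ultimately show ?thesis unfolding \<sigma>_def by blast
      qed
      have "\<forall>\<epsilon>>0. \<exists>s\<in>forward_orbit F p. dist s q < \<epsilon>"
      proof (intro allI impI)
        fix \<epsilon> :: real assume e: "\<epsilon> > 0"
        have w0: "w \<noteq> 0" using nw by auto
        have nuw: "norm (u / w) = 1" using nw q(3) by (simp add: norm_divide)
        obtain k where k: "dist ((f^^k) x0) y < \<epsilon>/4" "dist (cis (2*pi*real k*a)) (u / w) < \<epsilon>/4"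
          using D0[OF q(2) nuw] e by (metis divide_pos_pos zero_less_numeral)
        have "continuous_on B (f^^k)" using funpow_cont[OF contf fB] .
        then obtain \<delta> where \<delta>: "\<delta> > 0" "\<And>x'. x' \<in> B \<Longrightarrow> dist x' x0 < \<delta> \<Longrightarrow> dist ((f^^k) x') ((f^^k) x0) < \<epsilon>/4"
          using x0 e unfolding continuous_on_iff by (metis divide_pos_pos zero_less_numeral)
        obtain m where m: "dist ((f^^m) x) x0 < \<delta>" "dist (cis (2*pi*real m*a) * z) w < \<epsilon>/4"
          using W[OF \<delta>(1), of "\<epsilon>/4"] e by auto
        have mB: "(f^^m) x \<in> B" using funpow_maps[OF fB p(2)] .
        have d1: "dist ((f^^(k+m)) x) y < \<epsilon>/2"
          using \<delta>(2)[OF mB m(1)] k(1) dist_triangle[of "(f^^k) ((f^^m) x)" y "(f^^k) x0"]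
          by (simp add: funpow_add)
        have cm: "cis (2*pi*real (k+m)*a) = cis (2*pi*real k*a) * cis (2*pi*real m*a)"
          by (simp add: cis_mult algebra_simps)
        define c where "c = cis (2*pi*real k*a)"
        define c' where "c' = cis (2*pi*real m*a) * z"
        have nc: "norm c = 1" by (simp add: c_def)
        have "c * c' - u = c * (c' - w) + w * (c - u / w)"
          using w0 by (simp add: algebra_simps)
        then have "norm (c * c' - u) \<le> norm (c * (c' - w)) + norm (w * (c - u / w))"
          by (metis norm_triangle_ineq)
        also have "\<dots> = dist c' w + dist c (u / w)"
          using nc nw by (simp add: norm_mult dist_norm)
        finally have d2: "dist (cis (2*pi*real (k+m)*a) * z) u < \<epsilon>/2"
          using m(2) k(2) unfolding cm c_def c'_def dist_norm by (simp add: mult.assoc)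
        have "dist ((F^^(k+m)) p) q < \<epsilon>"
        proof -
          have "dist ((F^^(k+m)) p) q = sqrt ((dist ((f^^(k+m)) x) y)\<^sup>2 + (dist (cis (2*pi*real (k+m)*a) * z) u)\<^sup>2)"
            unfolding F_def p(1) q(1) funpow_F dist_Pair_Pair by simp
          also have "\<dots> \<le> dist ((f^^(k+m)) x) y + dist (cis (2*pi*real (k+m)*a) * z) u"
            by (rule sqrt_sum_squares_le_sum) auto
          finally show ?thesis using d1 d2 by linarith
        qed
        moreover have "(F^^(k+m)) p \<in> forward_orbit F p" unfolding forward_orbit_def by auto
        ultimately show "\<exists>s\<in>forward_orbit F p. dist s q < \<epsilon>" by blast
      qed
      then show "q \<in> closure (forward_orbit F p)" using closure_approachable by blast
    qed
  qed
  then show ?thesis using airr unfolding S_def F_def by blast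
qed

end
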